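(* Let $V$ be a finite set, $\mathcal{F}\subseteq 2^V$ a minimal hereditary family with $\delta(\mathcal{F})\ge 12$, and $x\in V$ with $f_3(x)=1$ and $f_1(x)=4$. Write $\mathcal{Q}(x)=\{Q\}$ with $Q=\{x,y_1,y_2,y_3\}$ and $N(x)=\{x,y_1,y_2,y_3,z\}$. Then: (1) $\mathcal{F}(x)=2^{\{y_1,y_2,y_3\}}\cup\{\{z\}\}\cup\{\{y_i,z\}: i\in[3]\}$; in particular $N(x)\subseteq N(z)$ and $N(x)\subseteq N(y_i)$ for all $i\in[3]$; (2) $c(Q)=0$; (3) $u(x)=5.3$.
   Context: Let $V$ be a finite set. A family $\mathcal{F}\subseteq 2^V$ is hereditary if $F'\subseteq F\in\mathcal{F}$ implies $F'\in\mathcal{F}$. For $x\in V$: the link is $\mathcal{F}(x)=\{F\setminus\{x\}: x\in F\in\mathcal{F}\}$, $d_{\mathcal{F}}(x)=|\mathcal{F}(x)|$, $\delta(\mathcal{F})=\min_{x\in V}d_{\mathcal{F}}(x)$, and the neighborhood is $N(x)=\bigcup_{x\in F\in\mathcal{F}}F$. For $A\subseteq V$, $d_{\mathcal{F}}(A)=|\{F\in\mathcal{F}: A\subseteq F\}|$. A set $F\in\mathcal{F}$ is maximal if no other member strictly contains it; a hereditary $\mathcal{F}$ with $\delta(\mathcal{F})\ge 12$ is minimal if $\delta(\mathcal{F}\setminus\{F\})\le 11$ for every maximal $F\in\mathcal{F}$. $f_i(x)$ denotes the number of $i$-element sets in $\mathcal{F}(x)$. A vertex $x$ is mini-weight if $f_1(x)=4$,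 $f_2(x)=5$, $f_3(x)=2$. $\mathcal{Q}=\{Q\in\mathcal{F}:|Q|=4\}$, $\mathcal{Q}(x)=\{Q\in\mathcal{Q}: x\in Q\}$, and for $Q\in\mathcal{Q}$, $c(Q)$ is the number of mini-weight vertices in $Q$. Weights: for $x\in F\in\mathcal{F}$ define $\omega(x,F)$ as follows. If $|F|\ne 3$, $\omega(x,F)=1/|F|$. If $|F|=3$: if $F$ is contained in some 4-element member of $\mathcal{F}$, every element of $F$ gets $\omega=1/3$; otherwise order the three 2-subsets of $F$ as $e_1,e_2,e_3$ with $d_{\mathcal{F}}(e_1)\le d_{\mathcal{F}}(e_2)\le d_{\mathcal{F}}(e_3)$; if $d_{\mathcal{F}}(e_2)\le 4<d_{\mathcal{F}}(e_3)$, the two elements of $e_3$ get $\omega=7/20$ and the element of $F\setminus e_3$ gets $6/20$; else if $d_{\mathcal{F}}(e_1)\le 4<d_{\mathcal{F}}(e_2)$, the two elements of $e_1$ get $7/20$ and the element of $F\setminus e_1$ gets $6/20$; otherwise every element of $F$ gets $1/3$. The weight of $x$ is $u(x)=\sum_{x\in F\in\mathcal{F}}\omega(x,F)$. *)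

theory Defs
  imports Complex_Main
begin

definition hereditary :: "'a set set \<Rightarrow> bool" where
  "hereditary \<F> \<longleftrightarrow> (\<forall>F\<in>\<F>. \<forall>F'. F' \<subseteq> F \<longrightarrow> F' \<in> \<F>)"

definition link :: "'a set set \<Rightarrow> 'a \<Rightarrow> 'a set set" where
  "link \<F> x = {F - {x} | F. F \<in> \<F> \<and> x \<in> F}"

definition deg :: "'a set set \<Rightarrow> 'a \<Rightarrow> nat" where
  "deg \<F> x = card (link \<F> x)"

text \<open>minimum degree over the ground set V (V nonempty in our use)\<close>
definition mindeg :: "'a set \<Rightarrow> 'a set set \<Rightarrow> nat" where
  "mindeg V \<F> = Min ((\<lambda>x. deg \<F> x) ` V)"

definition nbhd :: "'a set set \<Rightarrow> 'a \<Rightarrow> 'a set" where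
  "nbhd \<F> x = \<Union>{F \<in> \<F>. x \<in> F}"

definition setdeg :: "'a set set \<Rightarrow> 'a set \<Rightarrow> nat" where
  "setdeg \<F> A = card {F \<in> \<F>. A \<subseteq> F}"

definition maximal_in :: "'a set set \<Rightarrow> 'a set \<Rightarrow> bool" where
  "maximal_in \<F> F \<longleftrightarrow> F \<in> \<F> \<and> \<not> (\<exists>G\<in>\<F>. F \<subset> G)"

definition minimal_family :: "'a set \<Rightarrow> 'a set set \<Rightarrow> bool" where
  "minimal_family V \<F> \<longleftrightarrow> hereditary \<F> \<and> mindeg V \<F> \<ge> 12 \<and>
     (\<forall>F. maximal_in \<F> F \<longrightarrow> mindeg V (\<F> - {F}) \<le> 11)"

definition fnum :: "'a set set \<Rightarrow> nat \<Rightarrow> 'a \<Rightarrow> nat" where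
  "fnum \<F> i x = card {A \<in> link \<F> x. card A = i}"

definition mini_weight :: "'a set set \<Rightarrow> 'a \<Rightarrow> bool" where
  "mini_weight \<F> x \<longleftrightarrow> fnum \<F> 1 x = 4 \<and> fnum \<F> 2 x = 5 \<and> fnum \<F> 3 x = 2"

definition Qs :: "'a set set \<Rightarrow> 'a set set" where
  "Qs \<F> = {Q \<in> \<F>. card Q = 4}"

definition Qx :: "'a set set \<Rightarrow> 'a \<Rightarrow> 'a set set" where
  "Qx \<F> x = {Q \<in> Qs \<F>. x \<in> Q}"

definition cQ :: "'a set set \<Rightarrow> 'a set \<Rightarrow> nat" where
  "cQ \<F> Q = card {v \<in> Q. mini_weight \<F> v}"

definition sorted_pairs :: "'a set set \<Rightarrow> 'a set \<Rightarrow> 'a set \<Rightarrow> 'a set \<Rightarrow> 'a set \<Rightarrow> bool" where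
  "sorted_pairs \<F> F e1 e2 e3 \<longleftrightarrow>
     {e1, e2, e3} = {e. e \<subseteq> F \<and> card e = 2} \<and> e1 \<noteq> e2 \<and> e1 \<noteq> e3 \<and> e2 \<noteq> e3 \<and>
     setdeg \<F> e1 \<le> setdeg \<F> e2 \<and> setdeg \<F> e2 \<le> setdeg \<F> e3"

definition omega :: "'a set set \<Rightarrow> 'a \<Rightarrow> 'a set \<Rightarrow> real" where
  "omega \<F> x F =
    (if card F \<noteq> 3 then 1 / real (card F)
     else if (\<exists>Q\<in>\<F>. card Q = 4 \<and> F \<subseteq> Q) then 1/3
     else if (\<exists>e1 e2 e3. sorted_pairs \<F> F e1 e2 e3 \<and> setdeg \<F> e2 \<le> 4 \<and> 4 < setdeg \<F> e3) then
       (if (\<exists>e1 e2 e3. sorted_pairs \<F> F e1 e2 e3 \<and> setdeg \<F> e2 \<le> 4 \<and> 4 < setdeg \<F> e3 \<and> x \<in> e3)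
        then 7/20 else 6/20)
     else if (\<exists>e1 e2 e3. sorted_pairs \<F> F e1 e2 e3 \<and> setdeg \<F> e1 \<le> 4 \<and> 4 < setdeg \<F> e2) then
       (if (\<exists>e1 e2 e3. sorted_pairs \<F> F e1 e2 e3 \<and> setdeg \<F> e1 \<le> 4 \<and> 4 < setdeg \<F> e2 \<and> x \<in> e1)
        then 7/20 else 6/20)
     else 1/3)"

definition weight :: "'a set set \<Rightarrow> 'a \<Rightarrow> real" where
  "weight \<F> x = (\<Sum>F\<in>{F \<in> \<F>. x \<in> F}. omega \<F> x F)"

end

theory Submission
  imports Defs
begin
definition Uset :: "'a \<Rightarrow> 'a \<Rightarrow> 'a \<Rightarrow> 'a \<Rightarrow> 'a set set" where
 "Uset y a b z = set [{}, {y},{a},{b},{y,a},{y,b},{a,b},{y,a,b},{z},{y,z},{a,z},{b,z}]"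
lemma link_iff: "A \<in> link F v \<longleftrightarrow> v \<notin> A \<and> insert v A \<in> F"
  unfolding link_def
  apply (rule iffI)
   apply (auto simp: insert_absorb)
  done
lemma finite_link: "finite F \<Longrightarrow> finite (link F v)"
  unfolding link_def by auto

lemma two_subsets: "{e. e \<subseteq> {x,y,z} \<and> card e = 2} = {{x,y},{x,z},{y,z}}"
  if "distinct [x,y,z]" for x y z :: 'a
  using that by (auto simp: card_2_iff)

lemma omega735:
  assumes Qp: "\<And>G. G \<in> F \<Longrightarrow> x \<in> G \<Longrightarrow> card G = 4 \<Longrightarrow> G = {x,y,a,b}"
    and FX: "{G\<in>F. x\<in>G} = insert x ` Uset y a b z"
    and fin: "finite F"
    and d: "distinct [x,y,a,b,z]"
  shows "omega F x {x,y,z} = 7/20"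
proof -
  have mem: "\<And>A. A \<in> Uset y a b z \<Longrightarrow> insert x A \<in> F" using FX by blast
  have no4: "\<not>(\<exists>Q\<in>F. card Q = 4 \<and> {x,y,z} \<subseteq> Q)"
  proof
    assume "\<exists>Q\<in>F. card Q = 4 \<and> {x,y,z} \<subseteq> Q"
    then obtain Q where "Q \<in> F" "card Q = 4" "{x,y,z} \<subseteq> Q" by blast
    then have "Q = {x,y,a,b}" using Qp by blast
    with \<open>{x,y,z} \<subseteq> Q\<close> d show False by auto
  qed
  have c3: "card {x,y,z} = 3" using d by simp
  have sxy: "setdeg F {x,y} > 4"
  proof -
    have "{x,y} \<in> F" "{x,y,a} \<in> F" "{x,y,b} \<in> F" "{x,y,a,b} \<in> F" "{x,y,z} \<in> F"
      using mem[of "{y}"] mem[of "{y,a}"] mem[of "{y,b}"] mem[of "{y,a,b}"] mem[of "{y,z}"]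
      by (simp_all add: Uset_def)
    then have "set [{x,y},{x,y,a},{x,y,b},{x,y,a,b},{x,y,z}] \<subseteq> {G\<in>F. {x,y}\<subseteq>G}"
      by auto
    moreover have "distinct [{x,y},{x,y,a},{x,y,b},{x,y,a,b},{x,y,z}]"
      using d by (auto simp: doubleton_eq_iff insert_eq_iff)
    ultimately have "5 \<le> card {G\<in>F. {x,y}\<subseteq>G}"
    proof -
      assume s: "set [{x,y},{x,y,a},{x,y,b},{x,y,a,b},{x,y,z}] \<subseteq> {G\<in>F. {x,y}\<subseteq>G}"
        and dd: "distinct [{x,y},{x,y,a},{x,y,b},{x,y,a,b},{x,y,z}]"
      have "card (set [{x,y},{x,y,a},{x,y,b},{x,y,a,b},{x,y,z}]) = 5"
        using distinct_card[OF dd] by (simp only: length_Cons list.size)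
      moreover have "card (set [{x,y},{x,y,a},{x,y,b},{x,y,a,b},{x,y,z}]) \<le> card {G\<in>F. {x,y}\<subseteq>G}"
        by (rule card_mono[OF _ s]) (use fin in simp)
      ultimately show ?thesis by linarith
    qed
    then show ?thesis unfolding setdeg_def by simp
  qed
  have sxz: "setdeg F {x,z} \<le> 4"
  proof -
    have "{G\<in>F. {x,z}\<subseteq>G} \<subseteq> set [{x,z},{x,y,z},{x,a,z},{x,b,z}]"
    proof
      fix G assume G: "G \<in> {G\<in>F. {x,z}\<subseteq>G}"
      then have "G \<in> insert x ` Uset y a b z" using FX by blast
      then obtain A where A: "A \<in> Uset y a b z" "G = insert x A" by blast
      with G have "z \<in> A" using d by auto
      from A(1) have "A = {} \<or> A = {y} \<or> A = {a} \<or> A = {b} \<or> A = {y,a} \<or> A = {y,b} \<or> A = {a,b} \<or> A = {y,a,b} \<or> A = {z} \<or> A = {y,z} \<or> A = {a,z} \<or> A = {b,z}"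
        by (simp add: Uset_def)
      then show "G \<in> set [{x,z},{x,y,z},{x,a,z},{x,b,z}]"
        using d \<open>z \<in> A\<close> A(2) by (elim disjE) auto
    qed
    then have "card {G\<in>F. {x,z}\<subseteq>G} \<le> card (set [{x,z},{x,y,z},{x,a,z},{x,b,z}])"
      by (intro card_mono) auto
    also have "\<dots> \<le> 4" using card_length[of "[{x,z},{x,y,z},{x,a,z},{x,b,z}]"] by (simp only: length_Cons list.size)
    finally have "card {G\<in>F. {x,z}\<subseteq>G} \<le> 4" .
    then show ?thesis unfolding setdeg_def by simp
  qed
  have P: "{e. e \<subseteq> {x,y,z} \<and> card e = 2} = {{x,y},{x,z},{y,z}}"
    using d by (intro two_subsets) auto
  have neq: "{x,y} \<noteq> {x,z}" "{x,y} \<noteq> {y,z}" "{x,z} \<noteq> {y,z}"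
    using d by (auto simp: doubleton_eq_iff)
  show ?thesis
  proof (cases "setdeg F {y,z} \<le> 4")
    case True
    have ex: "\<exists>e1 e2 e3. sorted_pairs F {x,y,z} e1 e2 e3 \<and> setdeg F e2 \<le> 4 \<and> 4 < setdeg F e3 \<and> x \<in> e3"
    proof (cases "setdeg F {x,z} \<le> setdeg F {y,z}")
      case True
      show ?thesis
        apply (rule exI[of _ "{x,z}"], rule exI[of _ "{y,z}"], rule exI[of _ "{x,y}"])
        using True \<open>setdeg F {y,z} \<le> 4\<close> sxy neq unfolding sorted_pairs_def P by auto
    next
      case False
      show ?thesis
        apply (rule exI[of _ "{y,z}"], rule exI[of _ "{x,z}"], rule exI[of _ "{x,y}"])
        using False sxz sxy neq unfolding sorted_pairs_def P by auto
    qed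
    then have ex1: "\<exists>e1 e2 e3. sorted_pairs F {x,y,z} e1 e2 e3 \<and> setdeg F e2 \<le> 4 \<and> 4 < setdeg F e3"
      by blast
    show ?thesis unfolding omega_def using c3 no4 ex ex1 by simp
  next
    case False
    have nex: "\<not>(\<exists>e1 e2 e3. sorted_pairs F {x,y,z} e1 e2 e3 \<and> setdeg F e2 \<le> 4 \<and> 4 < setdeg F e3)"
    proof
      assume "\<exists>e1 e2 e3. sorted_pairs F {x,y,z} e1 e2 e3 \<and> setdeg F e2 \<le> 4 \<and> 4 < setdeg F e3"
      then obtain e1 e2 e3 where s: "sorted_pairs F {x,y,z} e1 e2 e3" "setdeg F e2 \<le> 4" by blast
      have se: "{e1,e2,e3} = {{x,y},{x,z},{y,z}}" "e1 \<noteq> e2" "setdeg F e1 \<le> setdeg F e2"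
        using s(1) unfolding sorted_pairs_def P by simp_all
      have m1: "e1 \<in> {{x,y},{x,z},{y,z}}" "e2 \<in> {{x,y},{x,z},{y,z}}" using se(1) by blast+
      have "e1 = {x,z}" using m1(1) se(3) s(2) False sxy by force
      moreover have "e2 = {x,z}" using m1(2) s(2) False sxy by force
      ultimately show False using se(2) by simp
    qed
    have ex: "\<exists>e1 e2 e3. sorted_pairs F {x,y,z} e1 e2 e3 \<and> setdeg F e1 \<le> 4 \<and> 4 < setdeg F e2 \<and> x \<in> e1"
    proof (cases "setdeg F {x,y} \<le> setdeg F {y,z}")
      case True
      show ?thesis
        apply (rule exI[of _ "{x,z}"], rule exI[of _ "{x,y}"], rule exI[of _ "{y,z}"])
        using True sxz sxy neq unfolding sorted_pairs_def P by auto
    next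
      case F: False
      show ?thesis
        apply (rule exI[of _ "{x,z}"], rule exI[of _ "{y,z}"], rule exI[of _ "{x,y}"])
        using F False sxz sxy neq unfolding sorted_pairs_def P by auto
    qed
    then have ex1: "\<exists>e1 e2 e3. sorted_pairs F {x,y,z} e1 e2 e3 \<and> setdeg F e1 \<le> 4 \<and> 4 < setdeg F e2"
      by blast
    show ?thesis unfolding omega_def using c3 no4 ex ex1 nex by simp
  qed
qed


lemma not_mw:
  assumes her: "\<And>A B. A\<in>F \<Longrightarrow> B\<subseteq>A \<Longrightarrow> B\<in>F" and fin: "finite F"
    and Qp: "\<And>G. G \<in> F \<Longrightarrow> x \<in> G \<Longrightarrow> card G = 4 \<Longrightarrow> G = {x,y,a,b}"
    and m1: "{x,y,a,b} \<in> F" and m2: "{x,y,z} \<in> F" and d: "distinct [x,y,a,b,z]"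
  shows "\<not> mini_weight F y"
proof
  assume mw: "mini_weight F y"
  hence f1: "card {A \<in> link F y. card A = 1} = 4" and f2: "card {A\<in>link F y. card A = 2} = 5"
    and f3: "card {A\<in>link F y. card A = 3} = 2" by (simp_all add: mini_weight_def fnum_def)
  have finL: "finite (link F y)" using finite_link[OF fin] .
  have inL: "\<And>A B. B \<in> F \<Longrightarrow> y \<notin> A \<Longrightarrow> insert y A \<subseteq> B \<Longrightarrow> A \<in> link F y"
  proof -
    fix A B assume "B \<in> F" "y \<notin> A" "insert y A \<subseteq> B"
    then show "A \<in> link F y" unfolding link_iff using her by blast
  qed
  have T1: "set [{x},{a},{b},{z}] \<subseteq> {A\<in>link F y. card A = 1}"
    using inL[OF m1, of "{x}"] inL[OF m1, of "{a}"] inL[OF m1, of "{b}"] inL[OF m2, of "{z}"] d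
    by auto
  have dT1: "distinct [{x},{a},{b},{z}]" using d by auto
  have "card (set [{x},{a},{b},{z}]) = 4" using distinct_card[OF dT1] by (simp only: length_Cons list.size)
  hence S1: "set [{x},{a},{b},{z}] = {A\<in>link F y. card A = 1}"
    using card_subset_eq[OF _ T1] finL f1 by simp
  have sub: "A \<subseteq> {x,a,b,z}" if AL: "A \<in> link F y" for A
  proof
    fix w assume wA: "w \<in> A"
    from AL have yA: "y \<notin> A" and iA: "insert y A \<in> F" using link_iff by metis+
    have "{w} \<in> link F y" using inL[OF iA, of "{w}"] wA yA by auto
    hence "{w} \<in> set [{x},{a},{b},{z}]" using S1 by simp
    thus "w \<in> {x,a,b,z}" by auto
  qed
  have no: "{x,a,z} \<notin> link F y" "{x,b,z} \<notin> link F y"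
  proof -
    show "{x,a,z} \<notin> link F y"
    proof
      assume "{x,a,z} \<in> link F y"
      hence "insert y {x,a,z} \<in> F" using link_iff by metis
      moreover have "card (insert y {x,a,z}) = 4" using d by auto
      ultimately have "insert y {x,a,z} = {x,y,a,b}" using Qp by blast
      thus False using d by auto
    qed
    show "{x,b,z} \<notin> link F y"
    proof
      assume "{x,b,z} \<in> link F y"
      hence "insert y {x,b,z} \<in> F" using link_iff by metis
      moreover have "card (insert y {x,b,z}) = 4" using d by auto
      ultimately have "insert y {x,b,z} = {x,y,a,b}" using Qp by blast
      thus False using d by auto
    qed
  qed
  have abz: "{a,b,z} \<in> link F y"
  proof (rule ccontr)
    assume n: "{a,b,z} \<notin> link F y"
    have "{A\<in>link F y. card A = 3} \<subseteq> {{x,a,b}}"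
    proof
      fix A assume "A \<in> {A\<in>link F y. card A = 3}"
      then have AL: "A \<in> link F y" and c: "card A = 3" by auto
      have As: "A \<subseteq> {x,a,b,z}" using sub AL by blast
      have c4: "card {x,a,b,z} = 4" using d by auto
      have "card ({x,a,b,z} - A) = 1" using card_Diff_subset[OF finite_subset[OF As] As] c c4 by simp
      then obtain w where w: "{x,a,b,z} - A = {w}" using card_1_singletonE by blast
      then have Aeq: "A = {x,a,b,z} - {w}" using As by blast
      have "w \<in> {x,a,b,z}" using w by blast
      then have "A = {a,b,z} \<or> A = {x,b,z} \<or> A = {x,a,z} \<or> A = {x,a,b}"
        using Aeq d by auto
      then show "A \<in> {{x,a,b}}" using AL n no by auto
    qed
    then have "card {A\<in>link F y. card A = 3} \<le> card {{x,a,b}}" by (intro card_mono) auto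
    then show False using f3 by simp
  qed
  have iabz: "insert y {a,b,z} \<in> F" using abz link_iff by metis
  have T2: "set [{x,a},{x,b},{a,b},{x,z},{a,z},{b,z}] \<subseteq> {A\<in>link F y. card A = 2}"
    using inL[OF m1, of "{x,a}"] inL[OF m1, of "{x,b}"] inL[OF m1, of "{a,b}"] inL[OF m2, of "{x,z}"]
      inL[OF iabz, of "{a,z}"] inL[OF iabz, of "{b,z}"] d
    by auto
  have dT2: "distinct [{x,a},{x,b},{a,b},{x,z},{a,z},{b,z}]" using d by (auto simp: doubleton_eq_iff)
  have "card (set [{x,a},{x,b},{a,b},{x,z},{a,z},{b,z}]) = 6"
    using distinct_card[OF dT2] by (simp only: length_Cons list.size)
  moreover have "card (set [{x,a},{x,b},{a,b},{x,z},{a,z},{b,z}]) \<le> card {A\<in>link F y. card A = 2}"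
    by (rule card_mono[OF _ T2]) (use finL in simp)
  ultimately show False using f2 by simp
qed

lemma Uset_eq: "Uset y a b z = Pow {y,a,b} \<union> {{z}} \<union> {{y,z},{a,z},{b,z}}"
  unfolding Uset_def by (auto simp: Pow_insert)

lemma Uset_perm1: "Uset a y b z = Uset y a b z"
  unfolding Uset_eq by (auto simp: insert_commute)
lemma Uset_perm2: "Uset b y a z = Uset y a b z"
  unfolding Uset_eq by (auto simp: insert_commute)

lemma Uset_distinct: "distinct [x,y,a,b,z] \<Longrightarrow> distinct [{}, {y},{a},{b},{y,a},{y,b},{a,b},{y,a,b},{z},{y,z},{a,z},{b,z}]"
  by (auto simp: doubleton_eq_iff insert_eq_iff)
theorem mainTheorem10:
  fixes V :: "'a set" and \<F> :: "'a set set" and x y1 y2 y3 z :: 'a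
  assumes "finite V"
    and "\<F> \<subseteq> Pow V"
    and "minimal_family V \<F>"
    and "x \<in> V"
    and "fnum \<F> 3 x = 1"
    and "fnum \<F> 1 x = 4"
    and "Qx \<F> x = {{x, y1, y2, y3}}"
    and "nbhd \<F> x = {x, y1, y2, y3, z}"
    and "distinct [x, y1, y2, y3, z]"
  shows "link \<F> x = Pow {y1, y2, y3} \<union> {{z}} \<union> {{y1, z}, {y2, z}, {y3, z}}
         \<and> nbhd \<F> x \<subseteq> nbhd \<F> z
         \<and> (\<forall>y\<in>{y1, y2, y3}. nbhd \<F> x \<subseteq> nbhd \<F> y)
         \<and> cQ \<F> {x, y1, y2, y3} = 0
         \<and> weight \<F> x = 53 / 10"
proof -
  note d = assms(9)
  have her: "\<And>A B. A\<in>\<F> \<Longrightarrow> B\<subseteq>A \<Longrightarrow> B\<in>\<F>"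
    using assms(3) unfolding minimal_family_def hereditary_def by blast
  have finF: "finite \<F>" using finite_subset[OF assms(2)] assms(1) by simp
  have degx: "12 \<le> deg \<F> x"
  proof -
    have "Min ((\<lambda>x. deg \<F> x) ` V) \<le> deg \<F> x" using assms(1,4) by (intro Min_le) auto
    moreover have "12 \<le> mindeg V \<F>" using assms(3) unfolding minimal_family_def by blast
    ultimately show ?thesis unfolding mindeg_def by linarith
  qed
  have Qp: "\<And>G. G\<in>\<F> \<Longrightarrow> x\<in>G \<Longrightarrow> card G = 4 \<Longrightarrow> G = {x,y1,y2,y3}"
    using assms(7) unfolding Qx_def Qs_def by blast
  have Qin: "{x,y1,y2,y3} \<in> \<F>"
    using assms(7) unfolding Qx_def Qs_def by blast
  have nb: "\<And>G. G\<in>\<F> \<Longrightarrow> x\<in>G \<Longrightarrow> G \<subseteq> {x,y1,y2,y3,z}"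
    using assms(8) unfolding nbhd_def by blast
  define U where "U = Uset y1 y2 y3 z"
  have Lsub: "link \<F> x \<subseteq> U"
  proof
    fix A assume AL: "A \<in> link \<F> x"
    then have xA: "x\<notin>A" and iA: "insert x A \<in> \<F>" by (simp_all add: link_iff)
    have As: "A \<subseteq> {y1,y2,y3,z}" using nb[OF iA] xA by auto
    have bad: "\<not> B \<subseteq> A" if B: "z \<in> B" "card B = 3" for B
    proof
      assume BA: "B \<subseteq> A"
      have fB: "finite B" using B(2) by (intro card_ge_0_finite) simp
      have "insert x B \<in> \<F>" using her[OF iA] BA by blast
      moreover have "x \<notin> B" using xA BA by blast
      then have "card (insert x B) = 4" using B(2) fB by simp
      ultimately have "insert x B = {x,y1,y2,y3}" using Qp by blast
      then show False using B(1) d by auto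
    qed
    have b1: "\<not> {y1,y2,z} \<subseteq> A" by (rule bad) (use d in auto)
    have b2: "\<not> {y1,y3,z} \<subseteq> A" by (rule bad) (use d in auto)
    have b3: "\<not> {y2,y3,z} \<subseteq> A" by (rule bad) (use d in auto)
    have Aeq: "A = (if y1\<in>A then {y1} else {}) \<union> (if y2 \<in> A then {y2} else {}) \<union> (if y3\<in>A then {y3} else {}) \<union> (if z\<in>A then {z} else {})"
      using As by auto
    show "A \<in> U" unfolding U_def Uset_def
      apply (subst Aeq) using b1 b2 b3
      by (cases "y1\<in>A"; cases "y2\<in>A"; cases "y3\<in>A"; cases "z\<in>A") auto
  qed
  have finU: "finite U" unfolding U_def Uset_def by simp
  have cardU: "card U \<le> 12" unfolding U_def Uset_def
    using card_length[of "[{}, {y1},{y2},{y3},{y1,y2},{y1,y3},{y2,y3},{y1,y2,y3},{z},{y1,z},{y2,z},{y3,z}]"]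
    by (simp only: length_Cons list.size)
  have LU: "link \<F> x = U"
    using card_seteq[OF finU Lsub] cardU degx unfolding deg_def by linarith
  have memU: "insert x A \<in> \<F>" if "A\<in>U" for A using link_iff[of A \<F> x] LU that by simp
  have xU: "x \<notin> A" if "A\<in>U" for A using link_iff[of A \<F> x] LU that by simp
  have FX: "{G\<in>\<F>. x\<in>G} = insert x ` U"
  proof
    show "{G\<in>\<F>. x\<in>G} \<subseteq> insert x ` U"
    proof
      fix G assume G: "G \<in> {G\<in>\<F>. x\<in>G}"
      then have "G - {x} \<in> link \<F> x" unfolding link_iff by (simp add: insert_absorb)
      then have "G - {x} \<in> U" using LU by simp
      moreover have "G = insert x (G - {x})" using G by auto
      ultimately show "G \<in> insert x ` U" by blast
    qed
    show "insert x ` U \<subseteq> {G\<in>\<F>. x\<in>G}" using memU by auto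
  qed
  have mz1: "{x,y1,z} \<in> \<F>" using memU[of "{y1,z}"] unfolding U_def Uset_def by simp
  have mz2: "{x,y2,z} \<in> \<F>" using memU[of "{y2,z}"] unfolding U_def Uset_def by simp
  have mz3: "{x,y3,z} \<in> \<F>" using memU[of "{y3,z}"] unfolding U_def Uset_def by simp
  have P1: "link \<F> x = Pow {y1, y2, y3} \<union> {{z}} \<union> {{y1, z}, {y2, z}, {y3, z}}"
    using LU unfolding U_def Uset_eq .
  have P2: "nbhd \<F> x \<subseteq> nbhd \<F> z"
    unfolding assms(8) unfolding nbhd_def using mz1 mz2 mz3 by blast
  have P3: "\<forall>y\<in>{y1, y2, y3}. nbhd \<F> x \<subseteq> nbhd \<F> y"
    unfolding assms(8) unfolding nbhd_def using mz1 mz2 mz3 Qin by blast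
  have e2: "{x,y2,y1,y3} = {x,y1,y2,y3}" by auto
  have e3: "{x,y3,y1,y2} = {x,y1,y2,y3}" by auto
  have Qp2: "\<And>G. G\<in>\<F> \<Longrightarrow> x\<in>G \<Longrightarrow> card G = 4 \<Longrightarrow> G = {x,y2,y1,y3}" using Qp e2 by simp
  have Qp3: "\<And>G. G\<in>\<F> \<Longrightarrow> x\<in>G \<Longrightarrow> card G = 4 \<Longrightarrow> G = {x,y3,y1,y2}" using Qp e3 by simp
  have Qin2: "{x,y2,y1,y3} \<in> \<F>" unfolding e2 by (fact Qin)
  have Qin3: "{x,y3,y1,y2} \<in> \<F>" unfolding e3 by (fact Qin)
  have d2: "distinct [x,y2,y1,y3,z]" using d by auto
  have d3: "distinct [x,y3,y1,y2,z]" using d by auto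
  have nm1: "\<not> mini_weight \<F> y1" by (rule not_mw[OF her finF Qp Qin mz1 d])
  have nm2: "\<not> mini_weight \<F> y2" by (rule not_mw[OF her finF Qp2 Qin2 mz2 d2])
  have nm3: "\<not> mini_weight \<F> y3" by (rule not_mw[OF her finF Qp3 Qin3 mz3 d3])
  have nm0: "\<not> mini_weight \<F> x" using assms(5) unfolding mini_weight_def by simp
  have P4: "cQ \<F> {x, y1, y2, y3} = 0"
  proof -
    have "{v \<in> {x, y1, y2, y3}. mini_weight \<F> v} = {}" using nm0 nm1 nm2 nm3 by auto
    then show ?thesis unfolding cQ_def by simp
  qed
  have FX2: "{G\<in>\<F>. x\<in>G} = insert x ` Uset y2 y1 y3 z" using FX Uset_perm1[of y2 y1 y3 z] unfolding U_def by simp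
  have FX3: "{G\<in>\<F>. x\<in>G} = insert x ` Uset y3 y1 y2 z" using FX Uset_perm2[of y3 y1 y2 z] unfolding U_def by simp
  have w1: "omega \<F> x {x,y1,z} = 7/20" by (rule omega735[OF Qp FX[unfolded U_def] finF d])
  have w2: "omega \<F> x {x,y2,z} = 7/20" by (rule omega735[OF Qp2 FX2 finF d2])
  have w3: "omega \<F> x {x,y3,z} = 7/20" by (rule omega735[OF Qp3 FX3 finF d3])
  have o0: "omega \<F> x {x} = 1" unfolding omega_def by simp
  have o1: "\<And>w. w \<noteq> x \<Longrightarrow> omega \<F> x {x,w} = 1/2" unfolding omega_def by simp
  have o2: "\<And>a b. {a,b} \<subseteq> {y1,y2,y3} \<Longrightarrow> card {x,a,b} = 3 \<Longrightarrow> omega \<F> x {x,a,b} = 1/3"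
  proof -
    fix a b assume ab: "{a,b} \<subseteq> {y1,y2,y3}" "card {x,a,b} = 3"
    have "\<exists>Q\<in>\<F>. card Q = 4 \<and> {x,a,b} \<subseteq> Q"
      using Qin ab(1) d by (intro bexI[of _ "{x,y1,y2,y3}"]) auto
    then show "omega \<F> x {x,a,b} = 1/3" unfolding omega_def using ab(2) by simp
  qed
  have o3: "omega \<F> x {x,y1,y2,y3} = 1/4" unfolding omega_def using d by simp
  have inj: "inj_on (insert x) U"
    unfolding inj_on_def using xU by (metis Diff_insert_absorb)
  have "weight \<F> x = sum (omega \<F> x) (insert x ` U)" unfolding weight_def FX ..
  also have "\<dots> = sum (\<lambda>A. omega \<F> x (insert x A)) U"
    using sum.reindex[OF inj] by (simp add: comp_def)
  also have "\<dots> = sum_list (map (\<lambda>A. omega \<F> x (insert x A)) [{}, {y1},{y2},{y3},{y1,y2},{y1,y3},{y2,y3},{y1,y2,y3},{z},{y1,z},{y2,z},{y3,z}])"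
    unfolding U_def Uset_def by (rule sum.distinct_set_conv_list[OF Uset_distinct[OF d]])
  also have "\<dots> = 53/10"
  proof -
    have dd: "x \<noteq> y1" "x \<noteq> y2" "x \<noteq> y3" "x \<noteq> z" "y1 \<noteq> y2" "y1 \<noteq> y3" "y2 \<noteq> y3"
      using d by auto
    have v1: "omega \<F> x {x,y1} = 1/2" "omega \<F> x {x,y2} = 1/2" "omega \<F> x {x,y3} = 1/2" "omega \<F> x {x,z} = 1/2"
      using o1 dd by auto
    have v2: "omega \<F> x {x,y1,y2} = 1/3" "omega \<F> x {x,y1,y3} = 1/3" "omega \<F> x {x,y2,y3} = 1/3"
      by (rule o2; use dd in auto)+
    show ?thesis using w1 w2 w3 o0 v1 v2 o3 by simp
  qed
  finally have P5: "weight \<F> x = 53/10" .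
  show ?thesis using P1 P2 P3 P4 P5 by blast
qed
end
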